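(* Let $\mathcal{C}\subset\mathbb{R}^n$ be closed and Clarke regular, $G:\mathcal{C}\to\mathbb{S}^n_+$ a metric, and $f:\mathbb{R}^n\to\mathbb{R}^n$ a vector field such that $x\mapsto\|f(x)\|_{G(x)}$ is bounded on $\mathcal{C}$. Let $\gamma\ge\sup_{x\in\mathcal{C}}\|f(x)\|_{G(x)}$. Then $x:[0,T]\to\mathcal{C}$ with $T>0$ is a solution of $\dot x=\Pi^G_\mathcal{C}[f](x)$, $x\in\mathcal{C}$, if and only if it is a solution of $$\dot x\in F(x):=f(x)-N^G_x\mathcal{C}\cap\gamma\mathbb{B},\qquad x\in\mathcal{C}.$$
   Context: $\mathbb{B}$ is the closed unit ball; $\mathbb{S}^n_+$ the symmetric positive definite matrices; $\langle u,v\rangle_{G(x)}:=u^TG(x)v$, $\|u\|_{G(x)}:=\langle u,u\rangle_{G(x)}^{1/2}$. Tangent cone: $v\in T_x\mathcal{C}$ iff there are $x_k\to x$ in $\mathcal{C}$ and $\delta_k\to0^+$ with $(x_k-x)/\delta_k\to v$; $\mathcal{C}$ is Clarke regular if $x\mapsto T_x\mathcal{C}$ is inner semicontinuous (then $T_x\mathcal{C}$ is closed convex). $N^G_x\mathcal{C}:=\{\eta:\langle\eta,v\rangle_{G(x)}\le0\ \forall v\in T_x\mathcal{C}\}$. $\Pi^G_\mathcal{C}[f](x):=\arg\min_{v\in T_x\mathcal{C}}\|v-f(x)\|_{G(x)}$ for $x\in\mathcal{C}$. Solutions are Carathéodory: absolutely continuous $x$ with $x(t)\in\mathcal{C}$ and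 the differential equation/inclusion holding for almost all $t\in[0,T]$. *)

theory Defs
  imports "HOL-Analysis.Analysis"
begin

definition tangent_cone :: "('a::real_normed_vector) set \<Rightarrow> 'a \<Rightarrow> 'a set" where
  "tangent_cone C x = {v. \<exists>xs \<delta>. (\<forall>k. xs k \<in> C) \<and> xs \<longlonglongrightarrow> x \<and> (\<forall>k. \<delta> k > (0::real))
       \<and> \<delta> \<longlonglongrightarrow> 0 \<and> (\<lambda>k. (1 / \<delta> k) *\<^sub>R (xs k - x)) \<longlonglongrightarrow> v}"

definition clarke_regular :: "('a::real_normed_vector) set \<Rightarrow> bool" where
  "clarke_regular C \<longleftrightarrow> (\<forall>x\<in>C. \<forall>v\<in>tangent_cone C x. \<forall>xs. (\<forall>k. xs k \<in> C) \<and> xs \<longlonglongrightarrow> x \<longrightarrow>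
       (\<exists>vs. vs \<longlonglongrightarrow> v \<and> (\<forall>\<^sub>F k in sequentially. vs k \<in> tangent_cone C (xs k))))"

definition sym_pos_def :: "real^'n^'n \<Rightarrow> bool" where
  "sym_pos_def M \<longleftrightarrow> transpose M = M \<and> (\<forall>v. v \<noteq> 0 \<longrightarrow> v \<bullet> (M *v v) > 0)"

definition ginner :: "('x \<Rightarrow> real^'n^'n) \<Rightarrow> 'x \<Rightarrow> real^'n \<Rightarrow> real^'n \<Rightarrow> real" where
  "ginner G x u v = u \<bullet> (G x *v v)"

definition gnorm :: "('x \<Rightarrow> real^'n^'n) \<Rightarrow> 'x \<Rightarrow> real^'n \<Rightarrow> real" where
  "gnorm G x u = sqrt (ginner G x u u)"

definition gnormal_cone :: "(real^'n \<Rightarrow> real^'n^'n) \<Rightarrow> (real^'n) set \<Rightarrow> real^'n \<Rightarrow> (real^'n) set" where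
  "gnormal_cone G C x = {\<eta>. \<forall>v\<in>tangent_cone C x. ginner G x \<eta> v \<le> 0}"

definition gproj :: "(real^'n \<Rightarrow> real^'n^'n) \<Rightarrow> (real^'n) set \<Rightarrow> (real^'n \<Rightarrow> real^'n) \<Rightarrow> real^'n \<Rightarrow> (real^'n) set" where
  "gproj G C f x = {v \<in> tangent_cone C x. \<forall>w\<in>tangent_cone C x. gnorm G x (v - f x) \<le> gnorm G x (w - f x)}"

definition abs_cont_on :: "real \<Rightarrow> real \<Rightarrow> (real \<Rightarrow> 'a::real_normed_vector) \<Rightarrow> bool" where
  "abs_cont_on a b x \<longleftrightarrow> (\<forall>\<epsilon>>0. \<exists>\<delta>>0. \<forall>(n::nat) (s::nat \<Rightarrow> real) e.
      (\<forall>i<n. a \<le> s i \<and> s i \<le> e i \<and> e i \<le> b) \<and>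
      (\<forall>i<n. \<forall>j<n. i \<noteq> j \<longrightarrow> e i \<le> s j \<or> e j \<le> s i) \<and>
      (\<Sum>i<n. e i - s i) < \<delta> \<longrightarrow> (\<Sum>i<n. norm (x (e i) - x (s i))) < \<epsilon>)"

definition caratheodory_solution :: "real \<Rightarrow> (real^'n) set \<Rightarrow> (real^'n \<Rightarrow> (real^'n) set) \<Rightarrow> (real \<Rightarrow> real^'n) \<Rightarrow> bool" where
  "caratheodory_solution T C \<Phi> x \<longleftrightarrow> abs_cont_on 0 T x \<and> (\<forall>t\<in>{0..T}. x t \<in> C) \<and>
     (AE t in lebesgue. t \<in> {0..T} \<longrightarrow>
        (\<exists>v. (x has_vector_derivative v) (at t within {0..T}) \<and> v \<in> \<Phi> (x t)))"

end

theory Submission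
  imports Defs
begin

lemma tc_scale:
  assumes "v \<in> tangent_cone C x" "c > 0"
  shows "c *\<^sub>R v \<in> tangent_cone C x"
proof -
  from assms(1) obtain xs \<delta> where h: "\<forall>k. xs k \<in> C" "xs \<longlonglongrightarrow> x" "\<forall>k. \<delta> k > (0::real)"
    "\<delta> \<longlonglongrightarrow> 0" "(\<lambda>k. (1 / \<delta> k) *\<^sub>R (xs k - x)) \<longlonglongrightarrow> v"
    unfolding tangent_cone_def by blast
  have "(\<lambda>k. \<delta> k / c) \<longlonglongrightarrow> 0 / c" using assms(2) by (intro tendsto_intros h(4)) auto
  moreover have "(\<lambda>k. c *\<^sub>R ((1 / \<delta> k) *\<^sub>R (xs k - x))) \<longlonglongrightarrow> c *\<^sub>R v" by (intro tendsto_intros h(5))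
  moreover have "\<And>k. c *\<^sub>R ((1 / \<delta> k) *\<^sub>R (xs k - x)) = (1 / (\<delta> k / c)) *\<^sub>R (xs k - x)"
    using assms(2) by (auto simp: field_simps)
  ultimately show ?thesis unfolding tangent_cone_def using h assms(2)
    by (intro CollectI exI[of _ xs] exI[of _ "\<lambda>k. \<delta> k / c"]) auto
qed

lemma lim_one_over_Suc: "(\<lambda>k. 1 / real (Suc k)) \<longlonglongrightarrow> 0"
  using LIMSEQ_inverse_real_of_nat by (simp add: inverse_eq_divide)

lemma tc_zero:
  assumes "x \<in> C"
  shows "0 \<in> tangent_cone C x"
  unfolding tangent_cone_def using assms lim_one_over_Suc
  by (intro CollectI exI[of _ "\<lambda>k. x"] exI[of _ "\<lambda>k. 1 / real (Suc k)"]) auto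

lemma tc_cone:
  assumes "x \<in> C" "v \<in> tangent_cone C x" "c \<ge> 0"
  shows "c *\<^sub>R v \<in> tangent_cone C x"
proof (cases "c = 0")
  case False
  then have "c > 0" using assms(3) by simp
  then show ?thesis using assms tc_scale by blast
qed (use assms tc_zero in auto)

lemma deriv_tangent:
  fixes x :: "real \<Rightarrow> 'a::real_normed_vector"
  assumes der: "(x has_vector_derivative v) (at t)" and inC: "\<forall>s\<in>{a..b}. x s \<in> C"
    and at: "a < t" and tb: "t < b" and s: "s = 1 \<or> s = -1"
  shows "s *\<^sub>R v \<in> tangent_cone C (x t)"
proof -
  define d where "d = min (t - a) (b - t)"
  have d: "d > 0" using at tb by (simp add: d_def)
  define \<delta> where "\<delta> = (\<lambda>k::nat. d * (1 / real (Suc k)))"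
  define h where "h = (\<lambda>k. s * \<delta> k)"
  have \<delta>pos: "\<forall>k. \<delta> k > 0" using d by (simp add: \<delta>_def)
  have \<delta>lim: "\<delta> \<longlonglongrightarrow> 0" unfolding \<delta>_def
    using tendsto_mult_right_zero[OF lim_one_over_Suc, of d] by simp
  have \<delta>le: "\<delta> k \<le> d" for k using d by (simp add: \<delta>_def field_simps)
  have ss: "s * s = 1" "\<bar>s\<bar> = 1" using s by auto
  have habs: "\<bar>h k\<bar> = \<delta> k" for k using \<delta>pos[rule_format, of k] ss by (simp add: h_def abs_mult)
  have hne: "h k \<noteq> 0" for k using habs[of k] \<delta>pos[rule_format, of k] by auto
  have hlim: "h \<longlonglongrightarrow> 0" unfolding h_def using tendsto_mult_right_zero[OF \<delta>lim] by simp
  have inC': "x (t + h k) \<in> C" for k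
  proof -
    have "\<bar>h k\<bar> \<le> d" using habs \<delta>le by simp
    then have "t + h k \<in> {a..b}" unfolding d_def by auto
    then show ?thesis using inC by blast
  qed
  have cont: "isCont x t" using der by (rule has_vector_derivative_continuous)
  have tlim: "(\<lambda>k. t + h k) \<longlonglongrightarrow> t" using tendsto_add[OF tendsto_const hlim, of t] by simp
  have xlim: "(\<lambda>k. x (t + h k)) \<longlonglongrightarrow> x t"
    using isCont_tendsto_compose[OF cont tlim] .
  have D: "((\<lambda>y. norm (x (t + y) - x t - y *\<^sub>R v) / norm y) \<longlongrightarrow> 0) (at 0)"
    using der unfolding has_vector_derivative_def has_derivative_at by simp
  have hat: "filterlim h (at 0) sequentially"
    unfolding filterlim_at using hne hlim by auto
  have D2: "(\<lambda>k. norm (x (t + h k) - x t - h k *\<^sub>R v) / norm (h k)) \<longlonglongrightarrow> 0"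
    using filterlim_compose[OF D hat] by (simp add: o_def)
  have eq: "norm ((1 / \<delta> k) *\<^sub>R (x (t + h k) - x t) - s *\<^sub>R v)
      = norm (x (t + h k) - x t - h k *\<^sub>R v) / norm (h k)" for k
  proof -
    have "(1 / \<delta> k) *\<^sub>R (x (t + h k) - x t) - s *\<^sub>R v
        = (1 / \<delta> k) *\<^sub>R (x (t + h k) - x t - h k *\<^sub>R v)"
      using \<delta>pos[rule_format, of k] by (simp add: h_def scaleR_diff_right)
    then show ?thesis using \<delta>pos[rule_format, of k] habs[of k]
      by (simp add: divide_inverse mult.commute)
  qed
  have "(\<lambda>k. norm ((1 / \<delta> k) *\<^sub>R (x (t + h k) - x t) - s *\<^sub>R v)) \<longlonglongrightarrow> 0"
    using D2 by (simp add: eq)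
  then have L: "(\<lambda>k. (1 / \<delta> k) *\<^sub>R (x (t + h k) - x t)) \<longlonglongrightarrow> s *\<^sub>R v"
    using tendsto_norm_zero_iff LIM_zero_iff by blast
  show ?thesis unfolding tangent_cone_def
    using inC' xlim \<delta>pos \<delta>lim L
    by (intro CollectI exI[of _ "\<lambda>k. x (t + h k)"] exI[of _ \<delta>]) auto
qed

lemma clarke_near:
  assumes cr: "clarke_regular C" and xC: "x \<in> C" and w: "w \<in> tangent_cone C x" and e: "e > 0"
  shows "\<exists>r>0. \<forall>y\<in>C. dist y x < r \<longrightarrow> (\<exists>u\<in>tangent_cone C y. dist u w < e)"
proof (rule ccontr)
  assume "\<not> ?thesis"
  then have "\<forall>k::nat. \<exists>y. y \<in> C \<and> dist y x < 1 / real (Suc k) \<and> (\<forall>u\<in>tangent_cone C y. \<not> dist u w < e)"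
    by (metis of_nat_Suc of_nat_0_less_iff zero_less_Suc zero_less_divide_1_iff)
  then obtain ys where ys: "\<And>k. ys k \<in> C" "\<And>k. dist (ys k) x < 1 / real (Suc k)"
     "\<And>k. \<forall>u\<in>tangent_cone C (ys k). \<not> dist u w < e"
    by metis
  have "(\<lambda>k. dist (ys k) x) \<longlonglongrightarrow> 0"
    by (rule tendsto_sandwich[OF _ _ tendsto_const lim_one_over_Suc])
       (use ys(2) in \<open>auto intro!: always_eventually less_imp_le simp del: of_nat_Suc\<close>)
  then have ylim: "ys \<longlonglongrightarrow> x" using tendsto_dist_iff by blast
  from cr xC w ys(1) ylim obtain vs where vs: "vs \<longlonglongrightarrow> w"
     "\<forall>\<^sub>F k in sequentially. vs k \<in> tangent_cone C (ys k)"
    unfolding clarke_regular_def by blast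
  have "\<forall>\<^sub>F k in sequentially. dist (vs k) w < e" using vs(1) e by (rule tendstoD)
  with vs(2) have "\<forall>\<^sub>F k in sequentially. False"
    by eventually_elim (use ys(3) in blast)
  then show False by simp
qed

lemma dist_bound:
  fixes C :: "'a::euclidean_space set"
  assumes cl: "closed C" and cr: "clarke_regular C" and xC: "x \<in> C"
    and w: "w \<in> tangent_cone C x" and e: "e > 0"
  shows "\<exists>r>0. \<forall>y\<in>C. \<forall>\<tau>. dist y x < r \<and> 0 \<le> \<tau> \<and> \<tau> < r \<longrightarrow> infdist (y + \<tau> *\<^sub>R w) C \<le> e * \<tau>"
proof -
  obtain \<rho> where \<rho>: "\<rho> > 0" and near: "\<And>p. p \<in> C \<Longrightarrow> dist p x < \<rho> \<Longrightarrow> \<exists>u\<in>tangent_cone C p. dist u w < e / 2"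
    using clarke_near[OF cr xC w, of "e/2"] e by auto
  define r where "r = \<rho> / (2 * norm w + 1)"
  have wp: "2 * norm w + 1 > 0" by (simp add: add_nonneg_pos)
  have r: "r > 0" using \<rho> wp by (simp add: r_def)
  have rw: "r * (2 * norm w + 1) = \<rho>" unfolding r_def
    using wp by simp
  have Cne: "C \<noteq> {}" using xC by auto
  have "infdist (y + \<tau> *\<^sub>R w) C \<le> e * \<tau>" if yC: "y \<in> C" and yx: "dist y x < r" and \<tau>: "0 \<le> \<tau>" "\<tau> < r" for y \<tau>
  proof -
    define S where "S = {s \<in> {0..\<tau>}. infdist (y + s *\<^sub>R w) C \<le> e * s}"
    have cS: "closed S"
    proof -
      have "closed {s. infdist (y + s *\<^sub>R w) C \<le> e * s}"
        by (intro closed_Collect_le continuous_intros)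
      then have "closed ({0..\<tau>} \<inter> {s. infdist (y + s *\<^sub>R w) C \<le> e * s})" by auto
      moreover have "S = {0..\<tau>} \<inter> {s. infdist (y + s *\<^sub>R w) C \<le> e * s}" unfolding S_def by auto
      ultimately show ?thesis by simp
    qed
    have S0: "0 \<in> S" unfolding S_def using \<tau> yC by simp
    have bS: "bdd_above S" unfolding S_def by (auto intro: bdd_aboveI[of _ \<tau>])
    define m where "m = Sup S"
    have mS: "m \<in> S" unfolding m_def using closed_contains_Sup[OF _ bS cS] S0 by auto
    have mle: "m \<le> \<tau>" "0 \<le> m" using mS unfolding S_def by auto
    have "m = \<tau>"
    proof (rule ccontr)
      assume "m \<noteq> \<tau>"
      then have mlt: "m < \<tau>" using mle by simp
      define z where "z = y + m *\<^sub>R w"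
      have zm: "infdist z C \<le> e * m" using mS unfolding S_def z_def by simp
      obtain p where pC: "p \<in> C" and pz: "infdist z C = dist z p"
        using infdist_attains_inf[OF cl Cne] by metis
      have "dist z p \<le> dist z y" using pz infdist_le[OF yC, of z] by simp
      also have "dist z y = m * norm w" using mle by (simp add: z_def dist_norm)
      finally have zp: "dist z p \<le> m * norm w" .
      have "dist p x \<le> dist p z + dist z y + dist y x" by (metis dist_triangle add_left_mono order_trans dist_commute add.commute)
      also have "\<dots> \<le> m * norm w + m * norm w + dist y x"
        using zp \<open>dist z y = m * norm w\<close> by (simp add: dist_commute)
      also have "\<dots> < r * (2 * norm w + 1)"
      proof -
        have "m * norm w \<le> r * norm w" using mle \<tau> by (intro mult_right_mono) auto
        then show ?thesis using yx by (simp add: algebra_simps)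
      qed
      finally have "dist p x < \<rho>" using rw by simp
      then obtain u where u: "u \<in> tangent_cone C p" "dist u w < e / 2" using near pC by blast
      then obtain qs \<delta> where h: "\<forall>k. qs k \<in> C" "\<forall>k. \<delta> k > (0::real)"
        "\<delta> \<longlonglongrightarrow> 0" "(\<lambda>k. (1 / \<delta> k) *\<^sub>R (qs k - p)) \<longlonglongrightarrow> u"
        unfolding tangent_cone_def by blast
      have ev1: "\<forall>\<^sub>F k in sequentially. \<delta> k < \<tau> - m"
        using h(3) mlt by (intro order_tendstoD) auto
      have ev2: "\<forall>\<^sub>F k in sequentially. dist ((1 / \<delta> k) *\<^sub>R (qs k - p)) u < e / 2"
        using h(4) e by (intro tendstoD) auto
      from eventually_happens'[OF _ eventually_conj[OF ev1 ev2]] obtain k where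
        k: "\<delta> k < \<tau> - m" "dist ((1 / \<delta> k) *\<^sub>R (qs k - p)) u < e / 2" by auto
      define d where "d = \<delta> k"
      define q where "q = qs k"
      have dpos: "d > 0" using h(2) by (simp add: d_def)
      have eqv: "z + d *\<^sub>R w - q = (z - p) + d *\<^sub>R (w - u) - d *\<^sub>R ((1 / d) *\<^sub>R (q - p) - u)"
        using dpos by (simp add: algebra_simps)
      have "norm (z + d *\<^sub>R w - q) \<le> norm (z - p) + norm (d *\<^sub>R (w - u)) + norm (d *\<^sub>R ((1 / d) *\<^sub>R (q - p) - u))"
        unfolding eqv by (metis norm_triangle_ineq4 norm_triangle_ineq add_right_mono order_trans diff_conv_add_uminus norm_minus_cancel)
      also have "\<dots> \<le> e * m + d * (e / 2) + d * (e / 2)"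
      proof -
        have "norm (z - p) \<le> e * m" using zm pz by (simp add: dist_norm)
        moreover have "norm (d *\<^sub>R (w - u)) \<le> d * (e / 2)"
          using u(2) dpos by (simp add: dist_norm norm_minus_commute)
        moreover have "norm (d *\<^sub>R ((1 / d) *\<^sub>R (q - p) - u)) \<le> d * (e / 2)"
          using k(2) dpos by (simp add: dist_norm d_def q_def)
        ultimately show ?thesis by linarith
      qed
      finally have "infdist (y + (m + d) *\<^sub>R w) C \<le> e * (m + d)"
        using infdist_le[OF h(1)[rule_format, of k], of "z + d *\<^sub>R w"]
        by (simp add: z_def q_def dist_norm algebra_simps)
      then have "m + d \<in> S" unfolding S_def using k(1) mle dpos by (simp add: d_def)
      then have "m + d \<le> m" unfolding m_def using bS by (rule cSup_upper)
      then show False using dpos by simp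
    qed
    then show ?thesis using mS unfolding S_def by simp
  qed
  then show ?thesis using r by blast
qed

lemma tc_add:
  fixes C :: "'a::euclidean_space set"
  assumes cl: "closed C" and cr: "clarke_regular C" and xC: "x \<in> C"
    and v: "v \<in> tangent_cone C x" and w: "w \<in> tangent_cone C x"
  shows "v + w \<in> tangent_cone C x"
proof -
  from v obtain xs \<delta> where h: "\<forall>k. xs k \<in> C" "xs \<longlonglongrightarrow> x" "\<forall>k. \<delta> k > (0::real)"
    "\<delta> \<longlonglongrightarrow> 0" "(\<lambda>k. (1 / \<delta> k) *\<^sub>R (xs k - x)) \<longlonglongrightarrow> v"
    unfolding tangent_cone_def by blast
  have Cne: "C \<noteq> {}" using xC by auto
  have "\<forall>k. \<exists>q. q \<in> C \<and> infdist (xs k + \<delta> k *\<^sub>R w) C = dist (xs k + \<delta> k *\<^sub>R w) q"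
    using infdist_attains_inf[OF cl Cne] by metis
  then obtain q where q: "\<And>k. q k \<in> C" "\<And>k. infdist (xs k + \<delta> k *\<^sub>R w) C = dist (xs k + \<delta> k *\<^sub>R w) (q k)"
    by metis
  define err where "err = (\<lambda>k. (1 / \<delta> k) *\<^sub>R (q k - xs k - \<delta> k *\<^sub>R w))"
  have errlim: "err \<longlonglongrightarrow> 0"
  proof (rule LIMSEQ_I)
    fix e :: real assume e: "e > 0"
    obtain r where r: "r > 0" and rb: "\<And>y \<tau>. y \<in> C \<Longrightarrow> dist y x < r \<Longrightarrow> 0 \<le> \<tau> \<Longrightarrow> \<tau> < r \<Longrightarrow> infdist (y + \<tau> *\<^sub>R w) C \<le> (e/2) * \<tau>"
      using dist_bound[OF cl cr xC w, of "e/2"] e by auto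
    have ev1: "\<forall>\<^sub>F k in sequentially. dist (xs k) x < r" using h(2) r by (rule tendstoD)
    have ev2: "\<forall>\<^sub>F k in sequentially. \<delta> k < r" using h(4) r by (intro order_tendstoD)
    from eventually_conj[OF ev1 ev2] obtain N where N: "\<And>k. k \<ge> N \<Longrightarrow> dist (xs k) x < r \<and> \<delta> k < r"
      unfolding eventually_sequentially by blast
    show "\<exists>N. \<forall>k\<ge>N. norm (err k - 0) < e"
    proof (intro exI allI impI)
      fix k assume "k \<ge> N"
      then have k: "dist (xs k) x < r" "\<delta> k < r" using N by auto
      have dp: "\<delta> k > 0" using h(3) by simp
      have "infdist (xs k + \<delta> k *\<^sub>R w) C \<le> (e/2) * \<delta> k"
        using rb[OF h(1)[rule_format] k(1) _ k(2)] dp by simp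
      then have "norm (q k - xs k - \<delta> k *\<^sub>R w) \<le> (e/2) * \<delta> k"
        using q(2)[of k] by (simp add: dist_norm norm_minus_commute algebra_simps)
      moreover have "norm (err k) = norm (q k - xs k - \<delta> k *\<^sub>R w) / \<delta> k"
        unfolding err_def using dp by (simp add: divide_inverse mult.commute)
      ultimately have "norm (err k) \<le> e / 2" using dp
        by (simp add: divide_le_eq)
      then show "norm (err k - 0) < e" using e by simp
    qed
  qed
  have eq: "(1 / \<delta> k) *\<^sub>R (q k - x) = (1 / \<delta> k) *\<^sub>R (xs k - x) + w + err k" for k
    using h(3)[rule_format, of k] by (simp add: err_def algebra_simps)
  have L: "(\<lambda>k. (1 / \<delta> k) *\<^sub>R (q k - x)) \<longlonglongrightarrow> v + w"
    unfolding eq using tendsto_add[OF tendsto_add[OF h(5) tendsto_const[of w]] errlim] by simp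
  have "(\<lambda>k. x + \<delta> k *\<^sub>R ((1 / \<delta> k) *\<^sub>R (q k - x))) \<longlonglongrightarrow> x + 0 *\<^sub>R (v + w)"
    by (intro tendsto_intros h(4) L)
  moreover have "\<And>k. x + \<delta> k *\<^sub>R ((1 / \<delta> k) *\<^sub>R (q k - x)) = q k" using h(3)
    by (simp add: less_imp_neq[symmetric])
  ultimately have qlim: "q \<longlonglongrightarrow> x" by simp
  show ?thesis unfolding tangent_cone_def using q(1) qlim h(3,4) L
    by (intro CollectI exI[of _ q] exI[of _ \<delta>]) auto
qed

lemma gsym:
  assumes "transpose (G y) = G y"
  shows "ginner G y u w = ginner G y w u"
proof -
  have "ginner G y u w = (u v* G y) \<bullet> w" by (simp add: ginner_def dot_lmul_matrix)
  also have "u v* G y = G y *v u" using vector_transpose_matrix[of u "G y"] assms by simp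
  finally show ?thesis by (simp add: ginner_def inner_commute)
qed

lemma gin_add_left: "ginner G y (a + b) c = ginner G y a c + ginner G y b c"
  by (simp add: ginner_def inner_add_left)
lemma gin_diff_left: "ginner G y (a - b) c = ginner G y a c - ginner G y b c"
  by (simp add: ginner_def inner_diff_left)
lemma gin_scale_left: "ginner G y (k *\<^sub>R a) c = k * ginner G y a c"
  by (simp add: ginner_def)
lemma gin_add_right: "ginner G y c (a + b) = ginner G y c a + ginner G y c b"
  by (simp add: ginner_def matrix_vector_right_distrib inner_add_right)
lemma gin_diff_right: "ginner G y c (a - b) = ginner G y c a - ginner G y c b"
  by (simp add: ginner_def matrix_vector_mult_diff_distrib inner_diff_right)
lemma gin_scale_right: "ginner G y c (k *\<^sub>R a) = k * ginner G y c a"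
  by (simp add: ginner_def matrix_vector_mult_scaleR)
lemma gin_minus_left: "ginner G y (- a) c = - ginner G y a c"
  by (simp add: ginner_def)
lemma gin_minus_right: "ginner G y c (- a) = - ginner G y c a"
  using gin_scale_right[of G y c "-1" a] by simp

lemma gpos: "sym_pos_def (G y) \<Longrightarrow> ginner G y a a \<ge> 0"
  unfolding sym_pos_def_def ginner_def by (cases "a = 0") (auto intro: less_imp_le)

lemma gquad:
  assumes "transpose (G y) = G y"
  shows "ginner G y (a + c *\<^sub>R b) (a + c *\<^sub>R b) = ginner G y a a + 2 * c * ginner G y a b + c^2 * ginner G y b b"
  using gsym[of G y a b, OF assms]
  by (simp add: gin_add_left gin_add_right gin_scale_left gin_scale_right power2_eq_square algebra_simps)

lemma quad_aux:
  fixes a b :: real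
  assumes a: "a \<ge> 0" and h: "\<forall>c>0. 0 \<le> 2 * c * b + c^2 * a"
  shows "b \<ge> 0"
proof (rule ccontr)
  assume "\<not> b \<ge> 0"
  then have b: "b < 0" by simp
  define c where "c = - b / (a + 1)"
  have a1: "a + 1 > 0" using a by simp
  have c: "c > 0" using b a1 unfolding c_def by (simp add: divide_neg_pos)
  have "0 \<le> 2 * c * b + c^2 * a" using h c by blast
  also have "\<dots> = c * (2 * b + c * a)" by (simp add: power2_eq_square algebra_simps)
  finally have "0 \<le> 2 * b + c * a" using c by (simp add: zero_le_mult_iff)
  moreover have "c * a < - b" 
  proof -
    have "c * a = - b * (a / (a + 1))" by (simp add: c_def)
    moreover have "a / (a + 1) < 1" using a1 by simp
    moreover have "(-b) * (a / (a + 1)) < (-b) * 1" using b \<open>a / (a + 1) < 1\<close>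
      by (intro mult_strict_left_mono) auto
    ultimately show ?thesis by simp
  qed
  ultimately show False using b by linarith
qed

lemma proj_to_normal:
  assumes sp: "sym_pos_def (G y)" and vp: "v \<in> gproj G C f y"
    and line: "\<forall>c. c *\<^sub>R v \<in> tangent_cone C y"
    and addc: "\<forall>w\<in>tangent_cone C y. \<forall>c>0. v + c *\<^sub>R w \<in> tangent_cone C y"
    and fb: "gnorm G y (f y) \<le> \<gamma>"
  shows "v \<in> {f y - \<eta> | \<eta>. \<eta> \<in> gnormal_cone G C y \<and> gnorm G y \<eta> \<le> \<gamma>}"
proof -
  have sym: "transpose (G y) = G y" using sp by (simp add: sym_pos_def_def)
  have mn: "ginner G y (v - f y) (v - f y) \<le> ginner G y (w - f y) (w - f y)" if "w \<in> tangent_cone C y" for w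
    using vp that unfolding gproj_def gnorm_def by auto
  have key: "0 \<le> 2 * c * ginner G y (v - f y) w + c^2 * ginner G y w w"
    if "v + c *\<^sub>R w \<in> tangent_cone C y" for c w
  proof -
    have "ginner G y (v - f y) (v - f y) \<le> ginner G y ((v - f y) + c *\<^sub>R w) ((v - f y) + c *\<^sub>R w)"
      using mn[OF that] by (simp add: algebra_simps)
    then show ?thesis unfolding gquad[of G y, OF sym] by simp
  qed
  have b1: "ginner G y (v - f y) v \<ge> 0"
  proof (rule quad_aux[OF gpos[of G y, OF sp]], intro allI impI)
    fix c :: real assume "c > 0"
    have "v + c *\<^sub>R v \<in> tangent_cone C y" using line[rule_format, of "1 + c"] by (simp add: algebra_simps)
    then show "0 \<le> 2 * c * ginner G y (v - f y) v + c^2 * ginner G y v v" by (rule key)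
  qed
  have b2: "- ginner G y (v - f y) v \<ge> 0"
  proof (rule quad_aux[OF gpos[of G y, OF sp]], intro allI impI)
    fix c :: real assume "c > 0"
    have "v + (-c) *\<^sub>R v \<in> tangent_cone C y" using line[rule_format, of "1 - c"] by (simp add: algebra_simps)
    from key[OF this] show "0 \<le> 2 * c * (- ginner G y (v - f y) v) + c^2 * ginner G y v v" by simp
  qed
  have b0: "ginner G y (v - f y) v = 0" using b1 b2 by simp
  have nc: "f y - v \<in> gnormal_cone G C y"
    unfolding gnormal_cone_def
  proof (intro CollectI ballI)
    fix w assume w: "w \<in> tangent_cone C y"
    have "ginner G y (v - f y) w \<ge> 0"
    proof (rule quad_aux[OF gpos[of G y, OF sp]], intro allI impI)
      fix c :: real assume "c > 0"
      then show "0 \<le> 2 * c * ginner G y (v - f y) w + c^2 * ginner G y w w"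
        using key addc w by blast
    qed
    moreover have "ginner G y (f y - v) w = - ginner G y (v - f y) w"
      by (simp add: gin_diff_left)
    ultimately show "ginner G y (f y - v) w \<le> 0" by simp
  qed
  have "ginner G y (f y) (f y) = ginner G y ((f y - v) + 1 *\<^sub>R v) ((f y - v) + 1 *\<^sub>R v)" by simp
  also have "\<dots> = ginner G y (f y - v) (f y - v) + 2 * ginner G y (f y - v) v + ginner G y v v"
    unfolding gquad[of G y, OF sym] by simp
  also have "ginner G y (f y - v) v = 0" using b0 by (simp add: gin_diff_left)
  finally have "ginner G y (f y - v) (f y - v) \<le> ginner G y (f y) (f y)" using gpos[of G y, OF sp, of v] by simp
  then have "gnorm G y (f y - v) \<le> gnorm G y (f y)" unfolding gnorm_def by simp
  with fb have "gnorm G y (f y - v) \<le> \<gamma>" by simp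
  with nc show ?thesis by (intro CollectI exI[of _ "f y - v"]) auto
qed

lemma normal_to_proj:
  assumes sp: "sym_pos_def (G y)"
    and vT: "v \<in> tangent_cone C y" and mvT: "- v \<in> tangent_cone C y"
    and vn: "v \<in> {f y - \<eta> | \<eta>. \<eta> \<in> gnormal_cone G C y \<and> gnorm G y \<eta> \<le> \<gamma>}"
  shows "v \<in> gproj G C f y"
proof -
  have sym: "transpose (G y) = G y" using sp by (simp add: sym_pos_def_def)
  from vn obtain \<eta> where v: "v = f y - \<eta>" and \<eta>: "\<eta> \<in> gnormal_cone G C y" by blast
  have n: "ginner G y \<eta> w \<le> 0" if "w \<in> tangent_cone C y" for w
    using \<eta> that unfolding gnormal_cone_def by blast
  have "ginner G y \<eta> v = 0" using n[OF vT] n[OF mvT] by (simp add: gin_minus_right)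
  have "ginner G y (v - f y) (v - f y) \<le> ginner G y (w - f y) (w - f y)" if w: "w \<in> tangent_cone C y" for w
  proof -
    have "ginner G y (w - f y) (w - f y) = ginner G y ((v - f y) + 1 *\<^sub>R (w - v)) ((v - f y) + 1 *\<^sub>R (w - v))"
      by (simp add: algebra_simps)
    also have "\<dots> = ginner G y (v - f y) (v - f y) + 2 * ginner G y (v - f y) (w - v) + ginner G y (w - v) (w - v)"
      unfolding gquad[of G y, OF sym] by simp
    also have "ginner G y (v - f y) (w - v) = ginner G y \<eta> v - ginner G y \<eta> w"
      using v by (simp add: gin_diff_right gin_minus_left)
    finally show ?thesis using n[OF w] \<open>ginner G y \<eta> v = 0\<close> gpos[of G y, OF sp, of "w - v"] by simp
  qed
  then show ?thesis using vT unfolding gproj_def gnorm_def by auto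
qed

theorem proposition2p11:
  fixes C :: "(real^'n) set" and G :: "real^'n \<Rightarrow> real^'n^'n"
    and f :: "real^'n \<Rightarrow> real^'n" and \<gamma> T :: real and x :: "real \<Rightarrow> real^'n"
  assumes "closed C" and "clarke_regular C"
    and "\<forall>y\<in>C. sym_pos_def (G y)"
    and "bdd_above ((\<lambda>y. gnorm G y (f y)) ` C)"
    and "\<forall>y\<in>C. gnorm G y (f y) \<le> \<gamma>"
    and "T > 0"
  shows "caratheodory_solution T C (gproj G C f) x \<longleftrightarrow>
         caratheodory_solution T C
           (\<lambda>y. {f y - \<eta> | \<eta>. \<eta> \<in> gnormal_cone G C y \<and> gnorm G y \<eta> \<le> \<gamma>}) x"
proof -
  note cl = assms(1) and cr = assms(2) and sp = assms(3) and fb = assms(5)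
  define \<Phi> where "\<Phi> = (\<lambda>y. {f y - \<eta> | \<eta>. \<eta> \<in> gnormal_cone G C y \<and> gnorm G y \<eta> \<le> \<gamma>})"
  have key: "v \<in> gproj G C f (x t) \<longleftrightarrow> v \<in> \<Phi> (x t)"
    if inC: "\<forall>s\<in>{0..T}. x s \<in> C" and t: "0 < t" "t < T"
      and der: "(x has_vector_derivative v) (at t within {0..T})" for t v
  proof -
    have der': "(x has_vector_derivative v) (at t)" using der at_within_Icc_at[OF t] by simp
    have xC: "x t \<in> C" using inC t by auto
    have vT: "v \<in> tangent_cone C (x t)"
      using deriv_tangent[OF der' inC t, of 1] by simp
    have mvT: "- v \<in> tangent_cone C (x t)"
      using deriv_tangent[OF der' inC t, of "-1"] by simp
    have line: "\<forall>c. c *\<^sub>R v \<in> tangent_cone C (x t)"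
    proof
      fix c :: real
      show "c *\<^sub>R v \<in> tangent_cone C (x t)"
      proof (cases "c \<ge> 0")
        case True then show ?thesis using tc_cone[OF xC vT] by blast
      next
        case False
        then have "(- c) *\<^sub>R (- v) \<in> tangent_cone C (x t)" using tc_cone[OF xC mvT, of "-c"] by simp
        then show ?thesis by simp
      qed
    qed
    have addc: "\<forall>w\<in>tangent_cone C (x t). \<forall>c>0. v + c *\<^sub>R w \<in> tangent_cone C (x t)"
      using tc_add[OF cl cr xC vT] tc_cone[OF xC] by (simp add: less_imp_le)
    have spx: "sym_pos_def (G (x t))" using sp xC by blast
    have fbx: "gnorm G (x t) (f (x t)) \<le> \<gamma>" using fb xC by blast
    show ?thesis
      using proj_to_normal[of G "x t" v C f, OF spx _ line addc fbx]
        normal_to_proj[of G "x t" v C, OF spx vT mvT]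
      unfolding \<Phi>_def by blast
  qed
  have ae: "AE t in lebesgue. t \<notin> {0, T}"
    unfolding eventually_ae_filter_negligible
    by (intro exI[of _ "{0, T}"]) (auto intro: negligible_finite)
  have eqv: "(AE t in lebesgue. t \<in> {0..T} \<longrightarrow> (\<exists>v. (x has_vector_derivative v) (at t within {0..T}) \<and> v \<in> gproj G C f (x t)))
     \<longleftrightarrow> (AE t in lebesgue. t \<in> {0..T} \<longrightarrow> (\<exists>v. (x has_vector_derivative v) (at t within {0..T}) \<and> v \<in> \<Phi> (x t)))"
    if inC: "\<forall>s\<in>{0..T}. x s \<in> C"
  proof (rule eventually_subst)
    show "AE t in lebesgue. (t \<in> {0..T} \<longrightarrow> (\<exists>v. (x has_vector_derivative v) (at t within {0..T}) \<and> v \<in> gproj G C f (x t)))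
     = (t \<in> {0..T} \<longrightarrow> (\<exists>v. (x has_vector_derivative v) (at t within {0..T}) \<and> v \<in> \<Phi> (x t)))"
      using ae
    proof (rule eventually_mono)
      fix t assume "t \<notin> {0, T}"
      then show "(t \<in> {0..T} \<longrightarrow> (\<exists>v. (x has_vector_derivative v) (at t within {0..T}) \<and> v \<in> gproj G C f (x t)))
     = (t \<in> {0..T} \<longrightarrow> (\<exists>v. (x has_vector_derivative v) (at t within {0..T}) \<and> v \<in> \<Phi> (x t)))"
        using key[OF inC] by (cases "t \<in> {0..T}") auto
    qed
  qed
  show ?thesis
    unfolding caratheodory_solution_def \<Phi>_def[symmetric] using eqv by blast
qed

end
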